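(* Let $h$ be a positive integer. The sequences $(n_h(k))_{k=1}^{\infty}$, $(m_h(k))_{k=1}^{\infty}$, $(n^{\sharp}_h(k))_{k=1}^{\infty}$, and $(m^{\sharp}_h(k))_{k=1}^{\infty}$ are strictly increasing.
   Context: For integers $a<b$, an interval of integers is $[a,b]=\{j\in\mathbf{Z}: a\le j\le b\}$ (so every interval has at least two elements), and $[0,0]=\{0\}$. For a set $A$ of integers, $hA=\{a_1+\cdots+a_h: a_i\in A\}$ (summands not necessarily distinct). For a nonempty finite set $A\subseteq\mathbf{Z}$ with $0\in hA$, $\ell_h(A)$ is the largest integer $n\ge 0$ with $[0,n]\subseteq hA$. For a nonempty finite set $A\subseteq\mathbf{Z}$, $\ell^{\sharp}_h(A)$ is the largest integer $n\ge 1$ such that $[c,c+n]\subseteq hA$ for some $c\in\mathbf{Z}$ (undefined if $hA$ contains no interval). With $\mathcal{A}_X(k)=\{A\subseteq X:|A|=k\}$ and $\mathbf{N}_0=\{0,1,2,\ldots\}$, define (maxima over those $A$ for which the quantity is defined) $n_h(k)=\max\{\ell_h(A): A\in\mathcal{A}_{\mathbf{N}_0}(k)\}$, $n^{\sharp}_h(k)=\max\{\ell^{\sharp}_h(A): A\in\mathcal{A}_{\mathbf{N}_0}(k)\}$, $m_h(k)=\max\{\ell_h(A): A\in\mathcal{A}_{\mathbf{Z}}(k)\}$, $m^{\sharp}_h(k)=\max\{\ell^{\sharp}_h(A): A\in\mathcal{A}_{\mathbf{Z}}(k)\}$. *)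

theory Defs
  imports Main
begin

definition sumset :: "nat \<Rightarrow> int set \<Rightarrow> int set" where
  "sumset h A = {(\<Sum>i<h. f i) | f. \<forall>i<h. f i \<in> A}"

text \<open>ell h A: largest n >= 0 with [0,n] subset of hA (meaningful when 0 in hA).
  Note {0..0} = {0} matches the convention [0,0] = {0}.\<close>
definition ell :: "nat \<Rightarrow> int set \<Rightarrow> nat" where
  "ell h A = Max {n::nat. {0..int n} \<subseteq> sumset h A}"

definition ell_sharp :: "nat \<Rightarrow> int set \<Rightarrow> nat" where
  "ell_sharp h A = Max {n::nat. n \<ge> 1 \<and> (\<exists>c. {c..c + int n} \<subseteq> sumset h A)}"

definition has_interval :: "nat \<Rightarrow> int set \<Rightarrow> bool" where
  "has_interval h A \<longleftrightarrow> (\<exists>c n. n \<ge> (1::nat) \<and> {c..c + int n} \<subseteq> sumset h A)"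

definition n_h :: "nat \<Rightarrow> nat \<Rightarrow> nat" where
  "n_h h k = Max {ell h A | A. A \<subseteq> {0..} \<and> finite A \<and> card A = k \<and> 0 \<in> sumset h A}"

definition m_h :: "nat \<Rightarrow> nat \<Rightarrow> nat" where
  "m_h h k = Max {ell h A | A. finite A \<and> card A = k \<and> 0 \<in> sumset h A}"

definition n_sharp :: "nat \<Rightarrow> nat \<Rightarrow> nat" where
  "n_sharp h k = Max {ell_sharp h A | A. A \<subseteq> {0..} \<and> finite A \<and> card A = k \<and> has_interval h A}"

definition m_sharp :: "nat \<Rightarrow> nat \<Rightarrow> nat" where
  "m_sharp h k = Max {ell_sharp h A | A. finite A \<and> card A = k \<and> has_interval h A}"

end

theory Submission
  imports Defs "HOL-Library.FuncSet"
begin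

lemma sumsetI: "(\<forall>i<h. f i \<in> A) \<Longrightarrow> (\<Sum>i<h. f i) \<in> sumset h A"
  unfolding sumset_def by blast

lemma sumset_mono: "A \<subseteq> B \<Longrightarrow> sumset h A \<subseteq> sumset h B"
  unfolding sumset_def by blast

lemma sumset_card:
  assumes "finite A"
  shows "finite (sumset h A) \<and> card (sumset h A) \<le> card A ^ h"
proof -
  have eq: "sumset h A = (\<lambda>f. \<Sum>i<h. f i) ` (PiE {..<h} (\<lambda>_. A))"
  proof
    show "sumset h A \<subseteq> (\<lambda>f. \<Sum>i<h. f i) ` (PiE {..<h} (\<lambda>_. A))"
    proof
      fix s assume "s \<in> sumset h A"
      then obtain f where f: "s = (\<Sum>i<h. f i)" "\<forall>i<h. f i \<in> A" unfolding sumset_def by blast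
      have "restrict f {..<h} \<in> PiE {..<h} (\<lambda>_. A)" using f(2) by auto
      moreover have "s = (\<Sum>i<h. restrict f {..<h} i)" using f(1) by simp
      ultimately show "s \<in> (\<lambda>f. \<Sum>i<h. f i) ` (PiE {..<h} (\<lambda>_. A))" by blast
    qed
  next
    show "(\<lambda>f. \<Sum>i<h. f i) ` (PiE {..<h} (\<lambda>_. A)) \<subseteq> sumset h A"
      unfolding sumset_def by (auto simp: PiE_def Pi_def)
  qed
  have fin: "finite (PiE {..<h} (\<lambda>_. A))" using assms by (simp add: finite_PiE)
  have "card (PiE {..<h} (\<lambda>_. A)) = card A ^ h" by (simp add: card_PiE)
  then show ?thesis using eq fin card_image_le by (metis finite_imageI)
qed

lemma ell_props:
  assumes "finite A" "0 \<in> sumset h A"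
  shows "{0..int (ell h A)} \<subseteq> sumset h A"
    "\<And>n. {0..int n} \<subseteq> sumset h A \<Longrightarrow> n \<le> ell h A"
    "ell h A \<le> card A ^ h"
proof -
  let ?N = "{n::nat. {0..int n} \<subseteq> sumset h A}"
  have sc: "finite (sumset h A)" "card (sumset h A) \<le> card A ^ h" using sumset_card[OF assms(1)] by auto
  have bnd: "n \<le> card A ^ h" if "n \<in> ?N" for n
  proof -
    have "card {0..int n} \<le> card (sumset h A)" using that sc(1) card_mono by blast
    then show ?thesis using sc(2) by simp
  qed
  have fin: "finite ?N" using bnd by (meson finite_atMost finite_subset subsetI atMost_iff)
  have ne: "0 \<in> ?N" using assms(2) by simp
  have "ell h A \<in> ?N" unfolding ell_def using fin ne Max_in by blast
  then show "{0..int (ell h A)} \<subseteq> sumset h A" "ell h A \<le> card A ^ h" using bnd by auto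
  show "\<And>n. {0..int n} \<subseteq> sumset h A \<Longrightarrow> n \<le> ell h A" unfolding ell_def using fin by simp
qed

lemma ell_sharp_props:
  assumes "finite A" "has_interval h A"
  shows "\<exists>c. {c..c + int (ell_sharp h A)} \<subseteq> sumset h A"
    "\<And>n c. n \<ge> 1 \<Longrightarrow> {c..c + int n} \<subseteq> sumset h A \<Longrightarrow> n \<le> ell_sharp h A"
    "ell_sharp h A \<le> card A ^ h"
proof -
  let ?N = "{n::nat. n \<ge> 1 \<and> (\<exists>c. {c..c + int n} \<subseteq> sumset h A)}"
  have sc: "finite (sumset h A)" "card (sumset h A) \<le> card A ^ h" using sumset_card[OF assms(1)] by auto
  have bnd: "n \<le> card A ^ h" if nN: "n \<in> ?N" for n
  proof -
    obtain c where c: "{c..c + int n} \<subseteq> sumset h A" using nN by blast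
    have "card {c..c + int n} \<le> card (sumset h A)" using c sc(1) card_mono by blast
    then show ?thesis using sc(2) by simp
  qed
  have fin: "finite ?N" using bnd by (meson finite_atMost finite_subset subsetI atMost_iff)
  have ne: "?N \<noteq> {}" using assms(2) unfolding has_interval_def by blast
  have "ell_sharp h A \<in> ?N" unfolding ell_sharp_def using fin ne Max_in by blast
  then show "\<exists>c. {c..c + int (ell_sharp h A)} \<subseteq> sumset h A" "ell_sharp h A \<le> card A ^ h"
    using bnd by auto
  show "\<And>n c. n \<ge> 1 \<Longrightarrow> {c..c + int n} \<subseteq> sumset h A \<Longrightarrow> n \<le> ell_sharp h A"
    unfolding ell_sharp_def using fin by (intro Max_ge) auto
qed

lemma extend:
  assumes "h \<ge> 1" "c \<in> sumset h A" "{c..c + int n} \<subseteq> sumset h A" "c + int n + 1 \<notin> sumset h A"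
  shows "\<exists>x. x \<notin> A \<and> (\<exists>a\<in>A. x = a + int n + 1) \<and> {c..c + int n + 1} \<subseteq> sumset h (insert x A)"
proof -
  obtain f where f: "c = (\<Sum>i<h. f i)" "\<forall>i<h. f i \<in> A" using assms(2) unfolding sumset_def by blast
  define m where "m = h - 1"
  have hm: "h = Suc m" using assms(1) m_def by simp
  define x where "x = f m + int n + 1"
  define g where "g = f(m := x)"
  have "(\<Sum>i<h. g i) = (\<Sum>i<m. g i) + g m" using hm by simp
  also have "(\<Sum>i<m. g i) = (\<Sum>i<m. f i)" unfolding g_def by (intro sum.cong) auto
  also have "g m = f m + int n + 1" unfolding g_def x_def by simp
  finally have gs: "(\<Sum>i<h. g i) = c + int n + 1" using f(1) hm by simp
  have gA: "\<forall>i<h. g i \<in> insert x A" using f(2) unfolding g_def by auto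
  have xn: "x \<notin> A"
  proof
    assume "x \<in> A"
    then have "\<forall>i<h. g i \<in> A" using f(2) unfolding g_def by auto
    then have "c + int n + 1 \<in> sumset h A" using gs sumsetI[of h g A] by simp
    then show False using assms(4) by blast
  qed
  have "c + int n + 1 \<in> sumset h (insert x A)" using gs gA sumsetI[of h g "insert x A"] by simp
  moreover have "sumset h A \<subseteq> sumset h (insert x A)" by (rule sumset_mono) auto
  moreover have "{c..c + int n + 1} = insert (c + int n + 1) {c..c + int n}" by auto
  ultimately have "{c..c + int n + 1} \<subseteq> sumset h (insert x A)" using assms(3)
    by (simp add: subset_trans)
  moreover have "f m \<in> A" using f(2) hm by simp
  ultimately show ?thesis using xn x_def by blast
qed

lemma max_step:
  assumes "finite S" "finite T" "S \<noteq> {}" "\<forall>v\<in>S. \<exists>w\<in>T. (v::nat) < w"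
  shows "Max S < Max T"
proof -
  obtain w where "w \<in> T" "Max S < w" using assms Max_in by blast
  then show ?thesis using assms(2) Max_ge by (meson order_less_le_trans)
qed

lemma smono_from_step:
  assumes "\<And>k. k \<ge> a \<Longrightarrow> (f::nat\<Rightarrow>nat) k < f (Suc k)"
  shows "strict_mono_on {a..} f"
proof -
  have *: "f k < f (k + Suc d)" if ka: "k \<ge> a" for k d
  proof (induction d)
    case 0
    show ?case using assms[OF ka] by (subst add_Suc_right, subst add_0_right)
  next
    case (Suc d)
    have le: "a \<le> k + Suc d" using ka by linarith
    have lt: "f (k + Suc d) < f (Suc (k + Suc d))" by (rule assms[OF le])
    have eq: "k + Suc (Suc d) = Suc (k + Suc d)" by arith
    show ?case by (subst eq) (rule less_trans[OF Suc.IH lt])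
  qed
  show ?thesis unfolding strict_mono_on_def
  proof (intro allI impI)
    fix r s assume rs: "r \<in> {a..} \<and> s \<in> {a..} \<and> r < s"
    then have lt: "r < s" by simp
    from less_imp_Suc_add[OF lt] obtain d where "s = Suc (r + d)" ..
    then have "s = r + Suc d" by simp
    then show "f r < f s" using *[of r d] rs by simp
  qed
qed

lemma base_set:
  assumes "h \<ge> 1"
  shows "finite {0..int k - 1}" "card {0..int k - 1} = k" "{0..int k - 1} \<subseteq> {0..}"
    "k \<ge> 1 \<Longrightarrow> 0 \<in> sumset h {0..int k - 1}"
    "k \<ge> 2 \<Longrightarrow> has_interval h {0..int k - 1}"
proof -
  show "finite {0..int k - 1}" "card {0..int k - 1} = k" "{0..int k - 1} \<subseteq> {0..}" by auto
  have z: "0 \<in> sumset h {0..int k - 1}" if "k \<ge> 1"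
  proof -
    have "(\<Sum>i<h. (\<lambda>_. 0::int) i) = 0" by simp
    then show ?thesis using sumsetI[of h "\<lambda>_. 0" "{0..int k - 1}"] that by simp
  qed
  then show "k \<ge> 1 \<Longrightarrow> 0 \<in> sumset h {0..int k - 1}" .
  assume k2: "k \<ge> 2"
  define g where "g = (\<lambda>i::nat. if i = 0 then (1::int) else 0)"
  have "(\<Sum>i<h. g i) = (\<Sum>i\<in>{0}. g i)" unfolding g_def using assms by (intro sum.mono_neutral_right) auto
  then have "(\<Sum>i<h. g i) = 1" unfolding g_def by simp
  moreover have "\<forall>i<h. g i \<in> {0..int k - 1}" using k2 unfolding g_def by auto
  ultimately have "1 \<in> sumset h {0..int k - 1}" using sumsetI[of h g "{0..int k - 1}"] by simp
  moreover have "0 \<in> sumset h {0..int k - 1}" using z k2 by simp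
  moreover have "{0..0 + int 1} = {0,1::int}" by auto
  ultimately have "{0..0 + int 1} \<subseteq> sumset h {0..int k - 1}" by auto
  then show "has_interval h {0..int k - 1}" unfolding has_interval_def by blast
qed

theorem mainTheorem2:
  fixes h :: nat
  assumes "h \<ge> 1"
  shows "strict_mono_on {1..} (n_h h) \<and> strict_mono_on {1..} (m_h h)
       \<and> strict_mono_on {2..} (n_sharp h) \<and> strict_mono_on {2..} (m_sharp h)"
proof (intro conjI)
  show "strict_mono_on {1..} (n_h h)"
  proof (rule smono_from_step)
    fix k :: nat assume k: "k \<ge> 1"
    let ?S = "\<lambda>k. {ell h A | A. A \<subseteq> {0..} \<and> finite A \<and> card A = k \<and> 0 \<in> sumset h A}"
    have fin: "finite (?S j)" for j
    proof (rule finite_subset[of _ "{..j^h}"])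
      show "?S j \<subseteq> {..j^h}" using ell_props(3) by auto
    qed simp
    have mem: "ell h {0..int k - 1} \<in> ?S k" using base_set[OF assms, of k] k
      by (intro CollectI exI[of _ "{0..int k - 1}"]) simp
    then have ne: "?S k \<noteq> {}" by blast
    have "\<forall>v\<in>?S k. \<exists>w\<in>?S (Suc k). v < w"
    proof
      fix v assume "v \<in> ?S k"
      then obtain A where A: "v = ell h A" "A \<subseteq> {0..}" "finite A" "card A = k" "0 \<in> sumset h A" by blast
      have i: "{0..0 + int v} \<subseteq> sumset h A" using ell_props(1)[OF A(3,5)] A(1) by simp
      have ni: "0 + int v + 1 \<notin> sumset h A"
      proof
        assume "0 + int v + 1 \<in> sumset h A"
        moreover have "{0..int (Suc v)} = insert (0 + int v + 1) {0..0 + int v}" by auto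
        ultimately have "{0..int (Suc v)} \<subseteq> sumset h A" using i by simp
        then show False using ell_props(2)[OF A(3,5), of "Suc v"] A(1) by simp
      qed
      obtain x where x: "x \<notin> A" "\<exists>a\<in>A. x = a + int v + 1" "{0..0 + int v + 1} \<subseteq> sumset h (insert x A)"
        using extend[OF assms A(5) i ni] by blast
      let ?B = "insert x A"
      have B: "?B \<subseteq> {0..}" "finite ?B" "card ?B = Suc k" "0 \<in> sumset h ?B"
        using x A by auto
      have "Suc v \<le> ell h ?B" using ell_props(2)[OF B(2,4), of "Suc v"] x(3) by (simp only: of_nat_Suc add.assoc add.commute[of 1] add_0_left)
      moreover have "ell h ?B \<in> ?S (Suc k)" using B by blast
      ultimately show "\<exists>w\<in>?S (Suc k). v < w" by (intro bexI[of _ "ell h ?B"]) auto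
    qed
    then show "n_h h k < n_h h (Suc k)" unfolding n_h_def by (rule max_step[OF fin fin ne])
  qed
  show "strict_mono_on {1..} (m_h h)"
  proof (rule smono_from_step)
    fix k :: nat assume k: "k \<ge> 1"
    let ?S = "\<lambda>k. {ell h A | A. finite A \<and> card A = k \<and> 0 \<in> sumset h A}"
    have fin: "finite (?S j)" for j
    proof (rule finite_subset[of _ "{..j^h}"])
      show "?S j \<subseteq> {..j^h}" using ell_props(3) by auto
    qed simp
    have mem: "ell h {0..int k - 1} \<in> ?S k" using base_set[OF assms, of k] k
      by (intro CollectI exI[of _ "{0..int k - 1}"]) simp
    then have ne: "?S k \<noteq> {}" by blast
    have "\<forall>v\<in>?S k. \<exists>w\<in>?S (Suc k). v < w"
    proof
      fix v assume "v \<in> ?S k"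
      then obtain A where A: "v = ell h A" "finite A" "card A = k" "0 \<in> sumset h A" by blast
      have i: "{0..0 + int v} \<subseteq> sumset h A" using ell_props(1)[OF A(2,4)] A(1) by simp
      have ni: "0 + int v + 1 \<notin> sumset h A"
      proof
        assume "0 + int v + 1 \<in> sumset h A"
        moreover have "{0..int (Suc v)} = insert (0 + int v + 1) {0..0 + int v}" by auto
        ultimately have "{0..int (Suc v)} \<subseteq> sumset h A" using i by simp
        then show False using ell_props(2)[OF A(2,4), of "Suc v"] A(1) by simp
      qed
      obtain x where x: "x \<notin> A" "{0..0 + int v + 1} \<subseteq> sumset h (insert x A)"
        using extend[OF assms A(4) i ni] by blast
      let ?B = "insert x A"
      have B: "finite ?B" "card ?B = Suc k" "0 \<in> sumset h ?B"
        using x A by auto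
      have "Suc v \<le> ell h ?B" using ell_props(2)[OF B(1,3), of "Suc v"] x(2) by (simp only: of_nat_Suc add.assoc add.commute[of 1] add_0_left)
      moreover have "ell h ?B \<in> ?S (Suc k)" using B by blast
      ultimately show "\<exists>w\<in>?S (Suc k). v < w" by (intro bexI[of _ "ell h ?B"]) auto
    qed
    then show "m_h h k < m_h h (Suc k)" unfolding m_h_def by (rule max_step[OF fin fin ne])
  qed
  show "strict_mono_on {2..} (n_sharp h)"
  proof (rule smono_from_step)
    fix k :: nat assume k: "k \<ge> 2"
    let ?S = "\<lambda>k. {ell_sharp h A | A. A \<subseteq> {0..} \<and> finite A \<and> card A = k \<and> has_interval h A}"
    have fin: "finite (?S j)" for j
    proof (rule finite_subset[of _ "{..j^h}"])
      show "?S j \<subseteq> {..j^h}" using ell_sharp_props(3) by auto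
    qed simp
    have mem: "ell_sharp h {0..int k - 1} \<in> ?S k" using base_set[OF assms, of k] k
      by (intro CollectI exI[of _ "{0..int k - 1}"]) simp
    then have ne: "?S k \<noteq> {}" by blast
    have "\<forall>v\<in>?S k. \<exists>w\<in>?S (Suc k). v < w"
    proof
      fix v assume "v \<in> ?S k"
      then obtain A where A: "v = ell_sharp h A" "A \<subseteq> {0..}" "finite A" "card A = k" "has_interval h A" by blast
      obtain c where i: "{c..c + int v} \<subseteq> sumset h A" using ell_sharp_props(1)[OF A(3,5)] A(1) by blast
      have ci: "c \<in> sumset h A" using i by auto
      have ni: "c + int v + 1 \<notin> sumset h A"
      proof
        assume "c + int v + 1 \<in> sumset h A"
        moreover have "{c..c + int (Suc v)} = insert (c + int v + 1) {c..c + int v}" by auto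
        ultimately have "{c..c + int (Suc v)} \<subseteq> sumset h A" using i by simp
        then show False using ell_sharp_props(2)[OF A(3,5), of "Suc v" c] A(1) by simp
      qed
      obtain x where x: "x \<notin> A" "\<exists>a\<in>A. x = a + int v + 1" "{c..c + int v + 1} \<subseteq> sumset h (insert x A)"
        using extend[OF assms ci i ni] by blast
      let ?B = "insert x A"
      have xi: "{c..c + int (Suc v)} \<subseteq> sumset h ?B" using x(3) by (simp only: of_nat_Suc add.assoc add.commute[of 1] add_0_left)
      have hi: "has_interval h ?B" unfolding has_interval_def using xi
        by (intro exI[of _ c] exI[of _ "Suc v"]) simp
      have B: "?B \<subseteq> {0..}" "finite ?B" "card ?B = Suc k" "has_interval h ?B"
        using x A hi by auto
      have "Suc v \<le> ell_sharp h ?B" using ell_sharp_props(2)[OF B(2,4) _ xi] by simp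
      moreover have "ell_sharp h ?B \<in> ?S (Suc k)" using B by blast
      ultimately show "\<exists>w\<in>?S (Suc k). v < w" by (intro bexI[of _ "ell_sharp h ?B"]) auto
    qed
    then show "n_sharp h k < n_sharp h (Suc k)" unfolding n_sharp_def by (rule max_step[OF fin fin ne])
  qed
  show "strict_mono_on {2..} (m_sharp h)"
  proof (rule smono_from_step)
    fix k :: nat assume k: "k \<ge> 2"
    let ?S = "\<lambda>k. {ell_sharp h A | A. finite A \<and> card A = k \<and> has_interval h A}"
    have fin: "finite (?S j)" for j
    proof (rule finite_subset[of _ "{..j^h}"])
      show "?S j \<subseteq> {..j^h}" using ell_sharp_props(3) by auto
    qed simp
    have mem: "ell_sharp h {0..int k - 1} \<in> ?S k" using base_set[OF assms, of k] k
      by (intro CollectI exI[of _ "{0..int k - 1}"]) simp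
    then have ne: "?S k \<noteq> {}" by blast
    have "\<forall>v\<in>?S k. \<exists>w\<in>?S (Suc k). v < w"
    proof
      fix v assume "v \<in> ?S k"
      then obtain A where A: "v = ell_sharp h A" "finite A" "card A = k" "has_interval h A" by blast
      obtain c where i: "{c..c + int v} \<subseteq> sumset h A" using ell_sharp_props(1)[OF A(2,4)] A(1) by blast
      have ci: "c \<in> sumset h A" using i by auto
      have ni: "c + int v + 1 \<notin> sumset h A"
      proof
        assume "c + int v + 1 \<in> sumset h A"
        moreover have "{c..c + int (Suc v)} = insert (c + int v + 1) {c..c + int v}" by auto
        ultimately have "{c..c + int (Suc v)} \<subseteq> sumset h A" using i by simp
        then show False using ell_sharp_props(2)[OF A(2,4), of "Suc v" c] A(1) by simp
      qed
      obtain x where x: "x \<notin> A" "{c..c + int v + 1} \<subseteq> sumset h (insert x A)"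
        using extend[OF assms ci i ni] by blast
      let ?B = "insert x A"
      have xi: "{c..c + int (Suc v)} \<subseteq> sumset h ?B" using x(2) by (simp only: of_nat_Suc add.assoc add.commute[of 1] add_0_left)
      have hi: "has_interval h ?B" unfolding has_interval_def using xi
        by (intro exI[of _ c] exI[of _ "Suc v"]) simp
      have B: "finite ?B" "card ?B = Suc k" "has_interval h ?B"
        using x A hi by auto
      have "Suc v \<le> ell_sharp h ?B" using ell_sharp_props(2)[OF B(1,3) _ xi] by simp
      moreover have "ell_sharp h ?B \<in> ?S (Suc k)" using B by blast
      ultimately show "\<exists>w\<in>?S (Suc k). v < w" by (intro bexI[of _ "ell_sharp h ?B"]) auto
    qed
    then show "m_sharp h k < m_sharp h (Suc k)" unfolding m_sharp_def by (rule max_step[OF fin fin ne])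
  qed
qed

end
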